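(* Let $p$ be an odd prime, $m$ a positive integer, $q=p^m$. Let $l,r,s,e$ be positive integers such that $l\ge3$ is odd, $\gcd(l,e)=1$, and $q-1=ls$. If $P(x)=x^r(x^{es}+1)$ is a permutation polynomial of $\mathbb{F}_q$, then $\gcd(r,s)=1$, $p\mid 2^s-1$, and $l\nmid 2r+es$.
   Context: A permutation polynomial of $\mathbb{F}_q$ is a polynomial inducing a bijection $\mathbb{F}_q\to\mathbb{F}_q$. *)

theory Defs
  imports "HOL-Computational_Algebra.Polynomial" "HOL-Library.Cardinality"
begin

definition permutation_polynomial :: "'a::{finite,field} poly \<Rightarrow> bool" where
  "permutation_polynomial P \<longleftrightarrow> bij (poly P)"

end

theory Submission
  imports Defs begin

lemma card_R_le:
  assumes "d > 0"
  shows "card {x::'a::{finite,field}. x ^ d = 1} \<le> d"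
proof -
  let ?q = "monom (1::'a) d - 1"
  have ne: "?q \<noteq> 0"
  proof
    assume "?q = 0"
    then have "coeff ?q d = 0" by simp
    then show False using assms by (simp add: coeff_monom)
  qed
  have deg: "degree ?q \<le> d"
    by (metis degree_diff_le degree_monom_le degree_1 le0)
  have "{x::'a. x ^ d = 1} = {x. poly ?q x = 0}" by (auto simp: poly_monom)
  then show ?thesis using card_poly_roots_bound[OF ne] deg by simp
qed

lemma fermat_ff:
  fixes x :: "'a::{finite,field}"
  assumes "x \<noteq> 0"
  shows "x ^ (CARD('a) - 1) = 1"
proof -
  let ?U = "{y::'a. y \<noteq> 0}"
  have cU: "card ?U = CARD('a) - 1"
  proof -
    have "?U = UNIV - {0}" by auto
    then show ?thesis by (simp add: card_Diff_subset)
  qed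
  have bij: "bij_betw (\<lambda>y. x * y) ?U ?U"
  proof (rule bij_betw_imageI)
    show "inj_on (\<lambda>y. x * y) ?U" using assms by (auto intro: inj_onI)
    show "(\<lambda>y. x * y) ` ?U = ?U"
    proof
      show "(\<lambda>y. x * y) ` ?U \<subseteq> ?U" using assms by auto
      show "?U \<subseteq> (\<lambda>y. x * y) ` ?U"
      proof
        fix z assume "z \<in> ?U"
        then have "z = x * (z / x)" "z / x \<in> ?U" using assms by auto
        then show "z \<in> (\<lambda>y. x * y) ` ?U" by blast
      qed
    qed
  qed
  have "(\<Prod>y\<in>?U. x * y) = (\<Prod>y\<in>?U. y)"
    using prod.reindex_bij_betw[OF bij, of "\<lambda>y. y"] by simp
  moreover have "(\<Prod>y\<in>?U. x * y) = x ^ card ?U * (\<Prod>y\<in>?U. y)"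
    by (simp add: prod.distrib)
  moreover have "(\<Prod>y\<in>?U. y) \<noteq> 0" by simp
  ultimately show ?thesis using cU by (metis mult_cancel_right1)
qed


lemma fib_card:
  fixes y :: "'a::{finite,field}"
  assumes "x0 \<noteq> 0" "x0 ^ d = y" "d > 0"
  shows "card {x. x \<noteq> 0 \<and> x ^ d = y} = card {z::'a. z ^ d = 1}"
proof -
  have "{x. x \<noteq> 0 \<and> x ^ d = y} = (\<lambda>z. x0 * z) ` {z::'a. z ^ d = 1}"
  proof
    show "{x. x \<noteq> 0 \<and> x ^ d = y} \<subseteq> (\<lambda>z. x0 * z) ` {z::'a. z ^ d = 1}"
    proof
      fix x assume "x \<in> {x. x \<noteq> 0 \<and> x ^ d = y}"
      then have x: "x \<noteq> 0" "x ^ d = y" by auto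
      have "y \<noteq> 0" using assms by auto
      then have "(x / x0) ^ d = 1" using x assms by (simp add: power_divide)
      moreover have "x = x0 * (x / x0)" using assms by simp
      ultimately show "x \<in> (\<lambda>z. x0 * z) ` {z::'a. z ^ d = 1}" by blast
    qed
    show "(\<lambda>z. x0 * z) ` {z::'a. z ^ d = 1} \<subseteq> {x. x \<noteq> 0 \<and> x ^ d = y}"
    proof
      fix x assume "x \<in> (\<lambda>z. x0 * z) ` {z::'a. z ^ d = 1}"
      then obtain z where z: "z ^ d = 1" "x = x0 * z" by auto
      have "z \<noteq> 0"
      proof
        assume "z = 0" then show False using z assms(3) by (simp add: power_0_left)
      qed
      then show "x \<in> {x. x \<noteq> 0 \<and> x ^ d = y}" using assms z
        by (auto simp: power_mult_distrib)
    qed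
  qed
  moreover have "inj_on (\<lambda>z. x0 * z) {z::'a. z ^ d = 1}" using assms(1) by (auto intro: inj_onI)
  ultimately show ?thesis by (simp add: card_image)
qed

lemma nat_sum_eq_each:
  fixes f :: "'b \<Rightarrow> nat"
  assumes "finite T" "\<And>y. y \<in> T \<Longrightarrow> f y \<le> c" "sum f T = card T * c" "y \<in> T"
  shows "f y = c"
proof -
  have "sum (\<lambda>y. c - f y) T + sum f T = sum (\<lambda>_. c) T"
    by (subst sum.distrib[symmetric]) (use assms(2) in auto)
  then have "sum (\<lambda>y. c - f y) T = 0" using assms(3) by simp
  then have "c - f y = 0" using assms(1,4) by simp
  then show ?thesis using assms(2,4) by (meson diff_is_0_eq le_antisym)
qed

lemma counting:
  assumes "d * d' = CARD('a::{finite,field}) - 1" "d > 0" "d' > 0"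
  shows "card {x::'a. x ^ d = 1} = d"
    and "\<And>y. y \<in> {x::'a. x ^ d' = 1} \<Longrightarrow> card {x::'a. x \<noteq> 0 \<and> x ^ d = y} = d"
proof -
  let ?U = "{y::'a. y \<noteq> 0}"
  let ?Rd = "{x::'a. x ^ d = 1}"
  let ?Rd' = "{x::'a. x ^ d' = 1}"
  let ?fib = "\<lambda>y. {x::'a. x \<noteq> 0 \<and> x ^ d = y}"
  have cU: "card ?U = CARD('a) - 1"
  proof -
    have "?U = UNIV - {0}" by auto
    then show ?thesis by (simp add: card_Diff_subset)
  qed
  have img: "(\<lambda>x. x ^ d) ` ?U \<subseteq> ?Rd'"
  proof
    fix z assume "z \<in> (\<lambda>x. x ^ d) ` ?U"
    then obtain x where "x \<noteq> 0" "z = x ^ d" by auto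
    then show "z \<in> ?Rd'" using fermat_ff[of x] assms(1) by (simp add: power_mult[symmetric])
  qed
  have fibeq: "\<And>y. {x. x \<in> ?U \<and> x ^ d = y} = ?fib y" by auto
  have "(\<Sum>y\<in>?Rd'. (\<Sum>x\<in>{x. x \<in> ?U \<and> x ^ d = y}. (1::nat))) = (\<Sum>x\<in>?U. 1)"
    by (rule sum.group[OF _ _ img]) simp_all
  then have "card ?U = (\<Sum>y\<in>?Rd'. card (?fib y))"
    by (simp only: fibeq card_eq_sum[symmetric])
  note sumeq = this
  have le: "\<And>y. card (?fib y) \<le> card ?Rd"
  proof -
    fix y
    show "card (?fib y) \<le> card ?Rd"
    proof (cases "?fib y = {}")
      case True then show ?thesis by (simp only: True card.empty)
    next
      case False
      then obtain x0 where "x0 \<noteq> 0" "x0 ^ d = y" by auto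
      then have "card (?fib y) = card ?Rd" using assms(2) by (rule fib_card)
      then show ?thesis by simp
    qed
  qed
  have "(\<Sum>y\<in>?Rd'. card (?fib y)) \<le> (\<Sum>y\<in>?Rd'. card ?Rd)"
    by (rule sum_mono) (rule le)
  also have "\<dots> = card ?Rd' * card ?Rd" by simp
  finally have A: "d * d' \<le> card ?Rd' * card ?Rd" using sumeq cU assms(1) by simp
  have B1: "card ?Rd \<le> d" using card_R_le assms(2) by blast
  have B2: "card ?Rd' \<le> d'" using card_R_le assms(3) by blast
  have C1: "card ?Rd = d"
  proof (rule ccontr)
    assume "card ?Rd \<noteq> d"
    then have lt: "card ?Rd < d" using B1 by simp
    have "card ?Rd' * card ?Rd \<le> d' * card ?Rd" using B2 by (rule mult_le_mono1)
    also have "\<dots> < d' * d" using lt assms(3) by (rule mult_less_mono2)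
    finally show False using A by (simp add: mult.commute)
  qed
  have C2: "card ?Rd' = d'"
  proof (rule ccontr)
    assume "card ?Rd' \<noteq> d'"
    then have lt: "card ?Rd' < d'" using B2 by simp
    have "card ?Rd' * card ?Rd < d' * card ?Rd" using lt C1 assms(2) by (simp only: mult_less_mono1)
    then show False using A C1 by (simp add: mult.commute)
  qed
  show "card ?Rd = d" by (rule C1)
  fix y assume y: "y \<in> ?Rd'"
  have fin: "finite ?Rd'" by simp
  have le': "\<And>y. y \<in> ?Rd' \<Longrightarrow> card (?fib y) \<le> d" using le C1 by simp
  have se: "(\<Sum>y\<in>?Rd'. card (?fib y)) = card ?Rd' * d"
    using sumeq cU assms(1) C2 by (simp add: mult.commute)
  show "card (?fib y) = d"
    by (rule nat_sum_eq_each[OF fin le' se y])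
qed

lemma pow_inj_R:
  fixes y z :: "'a::field"
  assumes "coprime k l" "k > 0" "y ^ l = 1" "z ^ l = 1" "y ^ k = z ^ k"
  shows "y = z"
proof -
  obtain a b where ab: "k * a = l * b + gcd k l" using bezout_nat[of k l] assms(2) by auto
  then have ab1: "k * a = l * b + 1" using assms(1) by simp
  have "y ^ (k * a) = z ^ (k * a)" by (simp add: power_mult assms(5))
  then have "y ^ (l * b + 1) = z ^ (l * b + 1)" by (simp only: ab1)
  then show ?thesis by (simp add: power_add power_mult assms(3,4))
qed

lemma pow_bij_R:
  fixes l k :: nat
  assumes "coprime k l" "k > 0"
  shows "bij_betw (\<lambda>y. y ^ k) {y::'a::{finite,field}. y ^ l = 1} {y. y ^ l = 1}"
    and "bij_betw (\<lambda>y. y ^ k) ({y::'a::{finite,field}. y ^ l = 1} - {1}) ({y. y ^ l = 1} - {1})"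
proof -
  let ?R = "{y::'a. y ^ l = 1}"
  have inj: "inj_on (\<lambda>y. y ^ k) ?R"
    by (rule inj_onI) (use pow_inj_R[OF assms] in auto)
  have into: "(\<lambda>y. y ^ k) ` ?R \<subseteq> ?R"
    by (auto, metis mult.commute power_mult power_one)
  show "bij_betw (\<lambda>y. y ^ k) ?R ?R"
    using endo_inj_surj[OF _ into inj] inj by (simp add: bij_betw_def)
  have inj2: "inj_on (\<lambda>y. y ^ k) (?R - {1})" using inj by (rule inj_on_subset) auto
  have into2: "(\<lambda>y. y ^ k) ` (?R - {1}) \<subseteq> ?R - {1}"
  proof
    fix w assume "w \<in> (\<lambda>y. y ^ k) ` (?R - {1})"
    then obtain y where y: "y \<in> ?R" "y \<noteq> 1" "w = y ^ k" by auto
    have "w \<in> ?R" using into y by auto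
    moreover have "w \<noteq> 1"
    proof
      assume "w = 1"
      then have "y ^ k = (1::'a) ^ k" using y by simp
      then have "y = 1" using pow_inj_R[OF assms, of y 1] y by simp
      then show False using y by simp
    qed
    ultimately show "w \<in> ?R - {1}" by simp
  qed
  show "bij_betw (\<lambda>y. y ^ k) (?R - {1}) (?R - {1})"
    using endo_inj_surj[OF _ into2 inj2] inj2 by (simp add: bij_betw_def)
qed

lemma prod_R_plus1:
  fixes l :: nat
  assumes "odd l"
  shows "(\<Prod>y\<in>{y::'a::{finite,field}. y ^ l = 1}. y + 1) = 2"
proof -
  let ?R = "{y::'a. y ^ l = 1}"
  let ?S = "?R - {1}"
  have cop: "coprime (2::nat) l" using assms by simp
  have b: "bij_betw (\<lambda>y. y ^ 2) ?S ?S" using pow_bij_R(2)[OF cop] by simp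
  have e1: "(\<Prod>y\<in>?S. 1 - y ^ 2) = (\<Prod>y\<in>?S. 1 - y)"
    using prod.reindex_bij_betw[OF b, of "\<lambda>y. 1 - y"] by simp
  have e2: "(\<Prod>y\<in>?S. 1 - y ^ 2) = (\<Prod>y\<in>?S. y + 1) * (\<Prod>y\<in>?S. 1 - y)"
    by (subst prod.distrib[symmetric]) (simp add: power2_eq_square algebra_simps)
  have nz: "(\<Prod>y\<in>?S. 1 - y) \<noteq> 0" by simp
  have S1: "(\<Prod>y\<in>?S. y + 1) = 1" using e1 e2 nz by simp
  have "?R = insert 1 ?S" by auto
  then have "(\<Prod>y\<in>?R. y + 1) = (1 + 1) * (\<Prod>y\<in>?S. y + 1)"
    by (metis (no_types, lifting) Diff_iff finite insertI1 prod.insert)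
  then show ?thesis using S1 by simp
qed


lemma char_card_zero: "of_nat CARD('a::{finite,field}) = (0::'a)"
proof -
  have b: "bij_betw (\<lambda>x::'a. x + 1) UNIV UNIV"
    by (rule bij_betw_byWitness[where f'="\<lambda>x. x - 1"]) auto
  have "(\<Sum>x\<in>UNIV. x + 1) = (\<Sum>x\<in>(UNIV::'a set). x)"
    using sum.reindex_bij_betw[OF b, of "\<lambda>x. x"] by simp
  moreover have "(\<Sum>x\<in>UNIV. x + 1) = (\<Sum>x\<in>(UNIV::'a set). x) + of_nat CARD('a)"
    by (simp add: sum.distrib)
  ultimately show ?thesis by simp
qed

lemma CHAR_eq:
  assumes "prime p" "CARD('a::{finite,field}) = p ^ m"
  shows "CHAR('a) = p"
proof -
  have "of_nat (p ^ m) = (0::'a)" using char_card_zero[where 'a='a] assms(2) by metis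
  then have "CHAR('a) dvd p ^ m" by (simp only: of_nat_eq_0_iff_char_dvd)
  moreover have pc: "prime CHAR('a)"
    by (rule prime_CHAR_semidom) (simp add: finite_imp_CHAR_pos)
  ultimately have "CHAR('a) dvd p" using prime_dvd_power by blast
  then show ?thesis using pc assms(1) by (simp add: primes_dvd_imp_eq)
qed


theorem theorem4p1:
  fixes p m l r s e :: nat
  assumes "prime p" and "odd p" and "m > 0"
    and "CARD('a) = p ^ m"
    and "l > 0" and "r > 0" and "s > 0" and "e > 0"
    and "l \<ge> 3" and "odd l" and "coprime l e"
    and "CARD('a) - 1 = l * s"
    and "permutation_polynomial
           (monom (1::'a::{finite,field}) r * (monom 1 (e * s) + 1))"
  shows "coprime r s \<and> p dvd (2 ^ s - 1) \<and> \<not> l dvd (2 * r + e * s)"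
proof -
  define P where "P = monom (1::'a) r * (monom 1 (e * s) + 1)"
  have Pev: "\<And>x. poly P x = x ^ r * (x ^ (e * s) + 1)" by (simp add: P_def poly_monom)
  have bijP: "bij (poly P)" using assms(13) by (simp add: permutation_polynomial_def P_def)
  have inj: "\<And>x y. poly P x = poly P y \<Longrightarrow> x = y"
    using bijP by (auto simp: bij_def inj_def)
  have q: "s * l = CARD('a) - 1" using assms(12) by simp
  have q': "l * s = CARD('a) - 1" using assms(12) by simp
  have cop: "coprime r s"
  proof (rule ccontr)
    assume nc: "\<not> coprime r s"
    define g where "g = gcd r s"
    have "g \<noteq> 1" using nc by (simp add: g_def coprime_iff_gcd_eq_1)
    have gpos: "g > 0" using assms(7) by (simp add: g_def)
    have "g dvd s" "g dvd r" by (simp_all add: g_def)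
    then obtain t u where st: "s = g * t" and ru: "r = g * u" by (auto elim!: dvdE)
    have tpos: "t > 0" using st assms(7) by (cases t) auto
    have "g * (t * l) = CARD('a) - 1" using q st by (simp add: mult.assoc)
    then have cg: "card {x::'a. x ^ g = 1} = g"
      using counting(1)[where 'a='a, of g "t * l"] gpos tpos assms(5) by simp
    obtain z :: 'a where z: "z ^ g = 1" "z \<noteq> 1"
    proof (rule ccontr)
      assume "\<not> thesis"
      then have "{x::'a. x ^ g = 1} \<subseteq> {1}" using that by blast
      then have "card {x::'a. x ^ g = 1} \<le> card {1::'a}" by (intro card_mono) simp_all
      then show False using cg \<open>g \<noteq> 1\<close> gpos by simp
    qed
    have "z ^ r = 1" using z by (simp add: ru power_mult)
    moreover have "z ^ (e * s) = 1" using z by (simp add: st power_mult mult.left_commute[of e g t])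
    ultimately have "poly P z = poly P 1" by (simp add: Pev)
    then show False using inj z by blast
  qed
  have qodd: "odd (CARD('a))" using assms(2,3,4) by simp
  obtain c where "CARD('a) = 2 * c + 1" using qodd oddE by blast
  then have "even (l * s)" using q' by simp
  then have evs: "even s" using assms(10) by simp
  have oddr: "odd r"
  proof
    assume "even r"
    then have "is_unit (2::nat)" using evs cop coprime_common_divisor by blast
    then show False by simp
  qed
  let ?U = "{x::'a. x \<noteq> 0}"
  let ?R = "{y::'a. y ^ l = 1}"
  have P0: "poly P 0 = 0" using assms(6) by (simp add: Pev)
  have bU: "bij_betw (poly P) ?U ?U"
  proof (rule bij_betw_imageI)
    show "inj_on (poly P) ?U" using inj by (auto intro: inj_onI)
    show "poly P ` ?U = ?U"
    proof
      show "poly P ` ?U \<subseteq> ?U" using inj P0 by fastforce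
      show "?U \<subseteq> poly P ` ?U"
      proof
        fix y :: 'a assume y: "y \<in> ?U"
        obtain x where "poly P x = y" using bijP by (metis bij_pointE)
        moreover have "x \<noteq> 0" using y P0 calculation by auto
        ultimately show "y \<in> poly P ` ?U" by blast
      qed
    qed
  qed
  define W where "W = (\<Prod>x\<in>?U. x)"
  have Wnz: "W \<noteq> 0" by (simp add: W_def)
  have binv: "bij_betw inverse ?U ?U"
    by (rule bij_betw_byWitness[where f'=inverse]) auto
  have "(\<Prod>x\<in>?U. inverse x) = W"
    using prod.reindex_bij_betw[OF binv, of "\<lambda>x. x"] by (simp add: W_def)
  moreover have "(\<Prod>x\<in>?U. inverse x) = inverse W"
    using prod_inversef[of "\<lambda>x. x" ?U] by (simp add: W_def o_def)
  ultimately have "inverse W = W" by simp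
  then have W2: "W * W = 1" using Wnz by (metis right_inverse)
  obtain k where rk: "r = 2 * k + 1" using oddr oddE by blast
  have Wr: "W ^ r = W" using W2 by (simp add: rk power_mult power2_eq_square)
  define Pi where "Pi = (\<Prod>x\<in>?U. x ^ (e * s) + 1)"
  have "(\<Prod>x\<in>?U. poly P x) = W"
    using prod.reindex_bij_betw[OF bU, of "\<lambda>x. x"] by (simp add: W_def)
  moreover have "(\<Prod>x\<in>?U. poly P x) = W ^ r * Pi"
    by (simp add: Pev prod.distrib prod_power_distrib W_def Pi_def)
  ultimately have "W * Pi = W" using Wr by simp
  then have Pi1: "Pi = 1" using Wnz by simp
  have img: "(\<lambda>x. x ^ s) ` ?U \<subseteq> ?R"
  proof
    fix z assume "z \<in> (\<lambda>x. x ^ s) ` ?U"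
    then obtain x where "x \<noteq> 0" "z = x ^ s" by auto
    then show "z \<in> ?R" using fermat_ff[of x] q by (simp add: power_mult[symmetric])
  qed
  have "Pi = (\<Prod>x\<in>?U. (x ^ s) ^ e + 1)"
    by (simp add: Pi_def power_mult[symmetric] mult.commute)
  also have "\<dots> = (\<Prod>y\<in>?R. \<Prod>x\<in>{x. x \<in> ?U \<and> x ^ s = y}. (x ^ s) ^ e + 1)"
    by (rule prod.group[OF _ _ img, symmetric]) simp_all
  also have "\<dots> = (\<Prod>y\<in>?R. \<Prod>x\<in>{x. x \<in> ?U \<and> x ^ s = y}. y ^ e + 1)"
    by (rule prod.cong) auto
  also have "\<dots> = (\<Prod>y\<in>?R. (y ^ e + 1) ^ s)"
  proof (rule prod.cong)
    fix y assume "y \<in> ?R"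
    then have "card {x::'a. x \<noteq> 0 \<and> x ^ s = y} = s"
      using counting(2)[OF q assms(7) assms(5)] by simp
    then show "(\<Prod>x\<in>{x. x \<in> ?U \<and> x ^ s = y}. y ^ e + 1) = (y ^ e + 1) ^ s" by simp
  qed simp
  also have "\<dots> = (\<Prod>y\<in>?R. y ^ e + 1) ^ s" by (simp add: prod_power_distrib)
  also have "(\<Prod>y\<in>?R. y ^ e + 1) = (\<Prod>y\<in>?R. y + 1)"
  proof -
    have "coprime e l" using assms(11) by (simp add: coprime_commute)
    then have b: "bij_betw (\<lambda>y. y ^ e) ?R ?R" using pow_bij_R(1) assms(8) by blast
    show ?thesis using prod.reindex_bij_betw[OF b, of "\<lambda>y. y + 1"] by simp
  qed
  also have "\<dots> = 2" using prod_R_plus1 assms(10) by blast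
  finally have "(2::'a) ^ s = 1" using Pi1 by simp
  then have "of_nat (2 ^ s - 1) = (0::'a)" by (simp add: of_nat_diff)
  then have "CHAR('a) dvd 2 ^ s - 1" by (simp only: of_nat_eq_0_iff_char_dvd)
  then have part2: "p dvd 2 ^ s - 1" using CHAR_eq[OF assms(1) assms(4)] by simp
  have part3: "\<not> l dvd (2 * r + e * s)"
  proof
    assume "l dvd (2 * r + e * s)"
    then obtain t where lt: "2 * r + e * s = l * t" by (auto elim: dvdE)
    have cl: "card ?R = l" using counting(1)[OF q' assms(5) assms(7)] by simp
    obtain x :: 'a where x: "x ^ l = 1" "x \<noteq> 1"
    proof (rule ccontr)
      assume "\<not> thesis"
      then have "?R \<subseteq> {1}" using that by blast
      then have "card ?R \<le> card {1::'a}" by (intro card_mono) simp_all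
      then show False using cl assms(9) by simp
    qed
    have xnz: "x \<noteq> 0" using x assms(5) by (auto simp: power_0_left)
    have x2: "x ^ 2 \<noteq> 1"
    proof
      assume "x ^ 2 = 1"
      then have "x ^ 2 = (1::'a) ^ 2" by simp
      moreover have "coprime (2::nat) l" using assms(10) by simp
      ultimately have "x = 1" using pow_inj_R[of 2 l x 1] x by simp
      then show False using x by simp
    qed
    have "x ^ (2 * r + e * s) = 1" by (simp add: lt power_mult x)
    then have AB: "x ^ r * x ^ r * x ^ (e * s) = 1" by (simp add: power_add mult_2 power_mult_distrib)
    have "poly P (inverse x) = poly P x"
    proof -
      have "poly P (inverse x) = inverse (x ^ r) * (inverse (x ^ (e * s)) + 1)"
        by (simp add: Pev power_inverse)
      also have "\<dots> = (x ^ r * x ^ r * x ^ (e * s)) * (inverse (x ^ r) * (inverse (x ^ (e * s)) + 1))"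
        using AB by simp
      also have "\<dots> = x ^ r * (1 + x ^ (e * s))"
        using xnz by (simp add: field_simps)
      also have "\<dots> = poly P x" by (simp add: Pev add.commute)
      finally show ?thesis .
    qed
    then have "inverse x = x" using inj by blast
    then have "x * x = 1" using xnz by (metis right_inverse)
    then show False using x2 by (simp add: power2_eq_square)
  qed
  show ?thesis using cop part2 part3 by simp
qed

end
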